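(* Let $\mathcal{R}$ be a cell space whose stabiliser $G_0$ is finite, and let $(F_i)_{i\in I}$ be a net, indexed by a directed set $(I,\leq)$, of nonempty finite subsets of $M$. Then $(F_i)_{i\in I}$ is a right Følner net in $\mathcal{R}$ if and only if for every finite subset $E\subseteq G/G_0$ we have $\lim_{i\in I}\frac{|\partial_E F_i|}{|F_i|}=0$.
   Context: A cell space $\mathcal{R}$ consists of a group $G$ acting transitively on the left on a nonempty set $M$ via $\triangleright$, a point $m_0\in M$ and a family $(g_{m_0,m})_{m\in M}$ in $G$ with $g_{m_0,m}\triangleright m_0=m$. $G_0$ is the stabiliser of $m_0$, $G/G_0$ the set of left cosets. The right semi-action $\triangleleft\colon M\times G/G_0\to M$ is $m\triangleleft gG_0=g_{m_0,m}g\triangleright m_0$; for $E\subseteq G/G_0$, $m\triangleleft E=\{m\triangleleft e:e\in E\}$, and $(\cdot\triangleleft\mathfrak{g})^{-1}(A)=\{m\in M: m\triangleleft\mathfrak{g}\in A\}$. For $A\subseteq M$ and $E\subseteq G/G_0$: $A^{-E}=\{m\in M: m\triangleleft E\subseteq A\}$, $A^{+E}=\{m\in M:(m\triangleleft E)\cap A\neq\emptyset\}$, $\partial_E A=A^{+E}\setminus A^{-E}$. A right Følner net in $\mathcal{R}$ is a net $(F_i)_{i\in I}$ of nonempty finite subsets of $M$ such that for every $\mathfrak{g}\in G/G_0$, $\lim_{i\in I}\frac{|F_i\setminus(\cdot\triangleleft\mathfrak{g})^{-1}(F_i)|}{|F_i|}=0$. *)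

theory Defs
  imports "HOL-Algebra.Group_Action" "HOL-Algebra.Left_Coset" Complex_Main
begin

definition cell_space ::
  "('g, 'b) monoid_scheme \<Rightarrow> 'm set \<Rightarrow> ('g \<Rightarrow> 'm \<Rightarrow> 'm) \<Rightarrow> 'm \<Rightarrow> ('m \<Rightarrow> 'g) \<Rightarrow> bool" where
  "cell_space G M act m0 gfam \<longleftrightarrow>
     group_action G M act \<and> M \<noteq> {} \<and> m0 \<in> M \<and>
     (\<forall>x\<in>M. \<forall>y\<in>M. \<exists>g\<in>carrier G. act g x = y) \<and>
     (\<forall>m\<in>M. gfam m \<in> carrier G \<and> act (gfam m) m0 = m)"

text \<open>Right semi-action  m \<triangleleft> gG0 = (gfam m * g) \<triangleright> m0 (independent of the representative).\<close>
definition semi_act ::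
  "('g, 'b) monoid_scheme \<Rightarrow> ('g \<Rightarrow> 'm \<Rightarrow> 'm) \<Rightarrow> 'm \<Rightarrow> ('m \<Rightarrow> 'g) \<Rightarrow> 'm \<Rightarrow> 'g set \<Rightarrow> 'm" where
  "semi_act G act m0 gfam m c = act (gfam m \<otimes>\<^bsub>G\<^esub> (SOME g. g \<in> c)) m0"

definition semi_preimage where
  "semi_preimage G M act m0 gfam c A = {m \<in> M. semi_act G act m0 gfam m c \<in> A}"

definition interior_E where
  "interior_E G M act m0 gfam E A = {m \<in> M. \<forall>e\<in>E. semi_act G act m0 gfam m e \<in> A}"

definition closure_E where
  "closure_E G M act m0 gfam E A = {m \<in> M. \<exists>e\<in>E. semi_act G act m0 gfam m e \<in> A}"

definition boundary_E where
  "boundary_E G M act m0 gfam E A = closure_E G M act m0 gfam E A - interior_E G M act m0 gfam E A"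

definition directed_set :: "'i set \<Rightarrow> ('i \<Rightarrow> 'i \<Rightarrow> bool) \<Rightarrow> bool" where
  "directed_set I rel \<longleftrightarrow> I \<noteq> {} \<and> (\<forall>i\<in>I. rel i i) \<and>
     (\<forall>i\<in>I. \<forall>j\<in>I. \<forall>k\<in>I. rel i j \<longrightarrow> rel j k \<longrightarrow> rel i k) \<and>
     (\<forall>i\<in>I. \<forall>j\<in>I. \<exists>k\<in>I. rel i k \<and> rel j k)"

definition net_tendsto :: "'i set \<Rightarrow> ('i \<Rightarrow> 'i \<Rightarrow> bool) \<Rightarrow> ('i \<Rightarrow> real) \<Rightarrow> real \<Rightarrow> bool" where
  "net_tendsto I rel x L \<longleftrightarrow> (\<forall>\<epsilon>>0. \<exists>i0\<in>I. \<forall>i\<in>I. rel i0 i \<longrightarrow> \<bar>x i - L\<bar> < \<epsilon>)"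

definition right_folner_net where
  "right_folner_net G M act m0 gfam I rel F \<longleftrightarrow>
     (\<forall>i\<in>I. F i \<noteq> {} \<and> finite (F i) \<and> F i \<subseteq> M) \<and>
     (\<forall>c\<in>lcosets\<^bsub>G\<^esub> (stabilizer G act m0).
        net_tendsto I rel
          (\<lambda>i. real (card (F i - semi_preimage G M act m0 gfam c (F i))) / real (card (F i))) 0)"

end

theory Submission
  imports Defs
begin

lemma cs_facts:
  assumes "cell_space G M act m0 gfam"
  shows "group_action G M act" "group G" "m0 \<in> M"
    "\<And>m. m \<in> M \<Longrightarrow> gfam m \<in> carrier G" "\<And>m. m \<in> M \<Longrightarrow> act (gfam m) m0 = m"
  using assms unfolding cell_space_def
  by (auto simp: group_action_def group_hom_def)

lemma coset_rep:
  fixes G :: "('g, 'b) monoid_scheme" (structure)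
  assumes cs: "cell_space G M act m0 gfam" and c: "c \<in> lcosets\<^bsub>G\<^esub> (stabilizer G act m0)"
  shows "(SOME g. g \<in> c) \<in> carrier G"
proof -
  interpret ga: group_action G M act using cs_facts[OF cs] by blast
  interpret group G using cs_facts[OF cs] by blast
  have sg: "subgroup (stabilizer G act m0) G" using ga.stabilizer_subgroup cs_facts[OF cs] by blast
  obtain a where a: "a \<in> carrier G" "c = a <# stabilizer G act m0" using c unfolding LCOSETS_def by blast
  have "a \<in> c" using a lcos_self[OF a(1) sg] by simp
  hence "(SOME g. g \<in> c) \<in> c" by (rule someI)
  thus ?thesis using a l_coset_subset_G[OF subgroup.subset[OF sg] a(1)] by blast
qed

lemma sa_coset:
  fixes G :: "('g, 'b) monoid_scheme" (structure)
  assumes cs: "cell_space G M act m0 gfam" and k: "k \<in> carrier G" and x: "x \<in> M"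
  shows "semi_act G act m0 gfam x (k <#\<^bsub>G\<^esub> stabilizer G act m0) = act (gfam x \<otimes>\<^bsub>G\<^esub> k) m0"
proof -
  interpret ga: group_action G M act using cs_facts[OF cs] by blast
  interpret group G using cs_facts[OF cs] by blast
  have sg: "subgroup (stabilizer G act m0) G" using ga.stabilizer_subgroup cs_facts[OF cs] by blast
  have "k \<in> k <# stabilizer G act m0" using lcos_self[OF k sg] .
  hence "(SOME g. g \<in> k <# stabilizer G act m0) \<in> k <# stabilizer G act m0" by (rule someI)
  then obtain h where h: "h \<in> stabilizer G act m0" "(SOME g. g \<in> k <# stabilizer G act m0) = k \<otimes> h"
    unfolding l_coset_def by blast
  have hc: "h \<in> carrier G" and hs: "act h m0 = m0" using h(1) unfolding stabilizer_def by auto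
  have gx: "gfam x \<in> carrier G" using cs_facts(4)[OF cs x] .
  have "act (gfam x \<otimes> (k \<otimes> h)) m0 = act ((gfam x \<otimes> k) \<otimes> h) m0" using gx k hc by (simp add: m_assoc)
  also have "\<dots> = act (gfam x \<otimes> k) (act h m0)"
    using ga.composition_rule[of m0 "gfam x \<otimes> k" h] cs_facts(3)[OF cs] gx k hc by simp
  finally show ?thesis unfolding semi_act_def h(2) hs .
qed

lemma key_h:
  fixes G :: "('g, 'b) monoid_scheme" (structure)
  assumes cs: "cell_space G M act m0 gfam" and m: "m \<in> M" and g: "g \<in> carrier G"
  shows "\<exists>h\<in>stabilizer G act m0. \<forall>g2\<in>carrier G.
     gfam m \<otimes>\<^bsub>G\<^esub> g2 = gfam (act (gfam m \<otimes>\<^bsub>G\<^esub> g) m0) \<otimes>\<^bsub>G\<^esub> (h \<otimes>\<^bsub>G\<^esub> inv\<^bsub>G\<^esub> g \<otimes>\<^bsub>G\<^esub> g2)"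
proof -
  interpret ga: group_action G M act using cs_facts[OF cs] by blast
  interpret group G using cs_facts[OF cs] by blast
  define f where "f = act (gfam m \<otimes> g) m0"
  have gm: "gfam m \<in> carrier G" using cs_facts(4)[OF cs m] .
  have m0: "m0 \<in> M" using cs_facts(3)[OF cs] .
  have fM: "f \<in> M" using ga.element_image[of "gfam m \<otimes> g" m0 f] gm g m0 f_def by simp
  have gf: "gfam f \<in> carrier G" using cs_facts(4)[OF cs fM] .
  define h where "h = inv (gfam f) \<otimes> (gfam m \<otimes> g)"
  have hc: "h \<in> carrier G" using gf gm g h_def by simp
  have "act h m0 = act (inv (gfam f)) (act (gfam m \<otimes> g) m0)"
    unfolding h_def using ga.composition_rule m0 gf gm g by simp
  also have "\<dots> = m0" using ga.orbit_sym_aux[OF gf m0 cs_facts(5)[OF cs fM]] f_def by simp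
  finally have hs: "h \<in> stabilizer G act m0" using hc unfolding stabilizer_def by simp
  have "\<forall>g2\<in>carrier G. gfam m \<otimes> g2 = gfam f \<otimes> (h \<otimes> inv g \<otimes> g2)"
  proof
    fix g2 assume g2: "g2 \<in> carrier G"
    have "h \<otimes> inv g \<otimes> g2 = inv (gfam f) \<otimes> (gfam m \<otimes> g2)"
      unfolding h_def using gf gm g g2 by (simp add: m_assoc)
    hence "gfam f \<otimes> (h \<otimes> inv g \<otimes> g2) = (gfam f \<otimes> inv (gfam f)) \<otimes> (gfam m \<otimes> g2)"
      using gf gm g g2 by (metis m_assoc inv_closed m_closed)
    also have "\<dots> = gfam m \<otimes> g2" using gf gm g g2 by simp
    finally show "gfam m \<otimes> g2 = gfam f \<otimes> (h \<otimes> inv g \<otimes> g2)" by simp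
  qed
  thus ?thesis using hs f_def by blast
qed


lemma net_le:
  assumes "net_tendsto I rel x 0" "\<forall>i\<in>I. 0 \<le> y i \<and> y i \<le> x i"
  shows "net_tendsto I rel y 0"
  unfolding net_tendsto_def
proof (intro allI impI)
  fix e :: real assume "e > 0"
  then obtain i0 where "i0 \<in> I" and "\<forall>i\<in>I. rel i0 i \<longrightarrow> \<bar>x i - 0\<bar> < e"
    using assms(1) unfolding net_tendsto_def by blast
  moreover have "\<forall>i\<in>I. \<bar>y i - 0\<bar> \<le> \<bar>x i - 0\<bar>" using assms(2) by auto
  ultimately show "\<exists>i0\<in>I. \<forall>i\<in>I. rel i0 i \<longrightarrow> \<bar>y i - 0\<bar> < e"
    using \<open>i0 \<in> I\<close> by (meson order_le_less_trans)
qed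

lemma net_sum:
  assumes d: "directed_set I rel" and fin: "finite S"
    and t: "\<forall>s\<in>S. net_tendsto I rel (x s) 0"
  shows "net_tendsto I rel (\<lambda>i. \<Sum>s\<in>S. x s i) 0"
  using fin t
proof (induction S rule: finite_induct)
  case empty
  obtain i0 where "i0 \<in> I" using d unfolding directed_set_def by blast
  then show ?case unfolding net_tendsto_def by auto
next
  case (insert a S)
  show ?case unfolding net_tendsto_def
  proof (intro allI impI)
    fix e :: real assume e: "e > 0"
    have e2: "e/2 > 0" using e by simp
    have ta: "net_tendsto I rel (x a) 0" using insert.prems by simp
    have tS: "net_tendsto I rel (\<lambda>i. \<Sum>s\<in>S. x s i) 0" using insert.IH insert.prems by simp
    obtain i1 where i1: "i1 \<in> I" "\<forall>i\<in>I. rel i1 i \<longrightarrow> \<bar>x a i - 0\<bar> < e/2"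
      using ta e2 unfolding net_tendsto_def by blast
    obtain i2 where i2: "i2 \<in> I" "\<forall>i\<in>I. rel i2 i \<longrightarrow> \<bar>(\<Sum>s\<in>S. x s i) - 0\<bar> < e/2"
      using tS e2 unfolding net_tendsto_def by blast
    obtain k where k: "k \<in> I" "rel i1 k" "rel i2 k" using d i1 i2 unfolding directed_set_def by blast
    have "\<forall>i\<in>I. rel k i \<longrightarrow> \<bar>(\<Sum>s\<in>insert a S. x s i) - 0\<bar> < e"
    proof (intro ballI impI)
      fix i assume i: "i \<in> I" "rel k i"
      have tr: "\<And>a b c. a\<in>I \<Longrightarrow> b\<in>I \<Longrightarrow> c\<in>I \<Longrightarrow> rel a b \<Longrightarrow> rel b c \<Longrightarrow> rel a c"
        using d unfolding directed_set_def by blast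
      have "rel i1 i" "rel i2 i" using tr[OF i1(1) k(1) i(1) k(2) i(2)] tr[OF i2(1) k(1) i(1) k(3) i(2)] by auto
      hence "\<bar>x a i\<bar> < e/2" "\<bar>(\<Sum>s\<in>S. x s i)\<bar> < e/2" using i1 i2 i by auto
      thus "\<bar>(\<Sum>s\<in>insert a S. x s i) - 0\<bar> < e" using insert.hyps by simp
    qed
    thus "\<exists>i0\<in>I. \<forall>i\<in>I. rel i0 i \<longrightarrow> \<bar>(\<Sum>s\<in>insert a S. x s i) - 0\<bar> < e" using k by blast
  qed
qed

lemma boundary_incl:
  fixes G :: "('g, 'b) monoid_scheme" (structure)
  assumes cs: "cell_space G M act m0 gfam"
    and E: "E \<subseteq> lcosets\<^bsub>G\<^esub> (stabilizer G act m0)" and A: "A \<subseteq> M"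
  defines "rep \<equiv> \<lambda>e. (SOME g. g \<in> e)"
  defines "D \<equiv> \<lambda>(h, e1). (h \<otimes> inv (rep e1)) <# stabilizer G act m0"
  defines "C \<equiv> \<lambda>(h, e1, e2). (h \<otimes> inv (rep e1) \<otimes> rep e2) <# stabilizer G act m0"
  shows "closure_E G M act m0 gfam E A \<subseteq>
           (\<Union>(h, e1)\<in>stabilizer G act m0 \<times> E. (\<lambda>f. semi_act G act m0 gfam f (D (h, e1))) ` A)"
    and "boundary_E G M act m0 gfam E A \<subseteq>
           (\<Union>(h, e1, e2)\<in>stabilizer G act m0 \<times> E \<times> E. (\<lambda>f. semi_act G act m0 gfam f (D (h, e1))) `
               (A - semi_preimage G M act m0 gfam (C (h, e1, e2)) A))"
proof -
  interpret ga: group_action G M act using cs_facts[OF cs] by blast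
  interpret group G using cs_facts[OF cs] by blast
  have repc: "\<And>e. e \<in> E \<Longrightarrow> rep e \<in> carrier G" using coset_rep[OF cs] E rep_def by blast
  have stc: "\<And>h. h \<in> stabilizer G act m0 \<Longrightarrow> h \<in> carrier G" unfolding stabilizer_def by auto
  have main: "\<exists>h\<in>stabilizer G act m0. f \<in> M \<and> semi_act G act m0 gfam f (D (h, e1)) = m \<and>
       (\<forall>e2\<in>E. semi_act G act m0 gfam f (C (h, e1, e2)) = semi_act G act m0 gfam m e2)"
    if m: "m \<in> M" and e1: "e1 \<in> E" and f: "f = semi_act G act m0 gfam m e1" for m e1 f
  proof -
    have g1: "rep e1 \<in> carrier G" using repc e1 .
    have gm: "gfam m \<in> carrier G" using cs_facts(4)[OF cs m] .
    have f': "f = act (gfam m \<otimes> rep e1) m0" using f unfolding semi_act_def rep_def by simp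
    have fM: "f \<in> M" using ga.element_image[of "gfam m \<otimes> rep e1" m0 f] gm g1 cs_facts(3)[OF cs] f' by simp
    obtain h where h: "h \<in> stabilizer G act m0"
      "\<forall>g2\<in>carrier G. gfam m \<otimes> g2 = gfam f \<otimes> (h \<otimes> inv (rep e1) \<otimes> g2)"
      using key_h[OF cs m g1] f' by blast
    have hc: "h \<in> carrier G" using stc h(1) .
    have "semi_act G act m0 gfam f (D (h, e1)) = act (gfam f \<otimes> (h \<otimes> inv (rep e1))) m0"
      unfolding D_def using sa_coset[OF cs _ fM] hc g1 by simp
    also have "\<dots> = act (gfam m \<otimes> \<one>) m0" using h(2)[rule_format, of \<one>] hc g1 by simp
    also have "\<dots> = m" using gm cs_facts(5)[OF cs m] by simp
    finally have 1: "semi_act G act m0 gfam f (D (h, e1)) = m" .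
    have "semi_act G act m0 gfam f (C (h, e1, e2)) = semi_act G act m0 gfam m e2" if e2: "e2 \<in> E" for e2
    proof -
      have g2: "rep e2 \<in> carrier G" using repc e2 .
      have "semi_act G act m0 gfam f (C (h, e1, e2)) = act (gfam f \<otimes> (h \<otimes> inv (rep e1) \<otimes> rep e2)) m0"
        unfolding C_def using sa_coset[OF cs _ fM] hc g1 g2 by simp
      also have "\<dots> = act (gfam m \<otimes> rep e2) m0" using h(2) g2 by simp
      finally show ?thesis unfolding semi_act_def rep_def by simp
    qed
    thus ?thesis using 1 h(1) fM by blast
  qed
  show "closure_E G M act m0 gfam E A \<subseteq>
           (\<Union>(h, e1)\<in>stabilizer G act m0 \<times> E. (\<lambda>f. semi_act G act m0 gfam f (D (h, e1))) ` A)"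
  proof
    fix m assume "m \<in> closure_E G M act m0 gfam E A"
    then obtain e1 where m: "m \<in> M" and e1: "e1 \<in> E" "semi_act G act m0 gfam m e1 \<in> A"
      unfolding closure_E_def by blast
    from main[OF m e1(1) refl] obtain h where "h \<in> stabilizer G act m0" and
       "semi_act G act m0 gfam (semi_act G act m0 gfam m e1) (D (h, e1)) = m" by blast
    hence "m \<in> (\<lambda>f. semi_act G act m0 gfam f (D (h, e1))) ` A"
    proof (intro image_eqI[rotated])
      show "semi_act G act m0 gfam m e1 \<in> A" by (fact e1(2))
    qed simp
    thus "m \<in> (\<Union>(h, e1)\<in>stabilizer G act m0 \<times> E. (\<lambda>f. semi_act G act m0 gfam f (D (h, e1))) ` A)"
      by (intro UN_I[of "(h, e1)"]) (use e1 \<open>h \<in> stabilizer G act m0\<close> in auto)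
  qed
  show "boundary_E G M act m0 gfam E A \<subseteq>
           (\<Union>(h, e1, e2)\<in>stabilizer G act m0 \<times> E \<times> E. (\<lambda>f. semi_act G act m0 gfam f (D (h, e1))) `
               (A - semi_preimage G M act m0 gfam (C (h, e1, e2)) A))"
  proof
    fix m assume "m \<in> boundary_E G M act m0 gfam E A"
    then obtain e1 e2 where m: "m \<in> M" and e1: "e1 \<in> E" "semi_act G act m0 gfam m e1 \<in> A"
      and e2: "e2 \<in> E" "semi_act G act m0 gfam m e2 \<notin> A"
      unfolding boundary_E_def closure_E_def interior_E_def by blast
    from main[OF m e1(1) refl] obtain h where h: "h \<in> stabilizer G act m0"
       "semi_act G act m0 gfam (semi_act G act m0 gfam m e1) (D (h, e1)) = m"
       "semi_act G act m0 gfam (semi_act G act m0 gfam m e1) (C (h, e1, e2)) = semi_act G act m0 gfam m e2"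
      using e2 by blast
    have "semi_act G act m0 gfam m e1 \<in> A - semi_preimage G M act m0 gfam (C (h, e1, e2)) A"
      using e1 e2 h unfolding semi_preimage_def by auto
    hence "m \<in> (\<lambda>f. semi_act G act m0 gfam f (D (h, e1))) ` (A - semi_preimage G M act m0 gfam (C (h, e1, e2)) A)"
    proof (rule image_eqI[rotated])
      show "m = semi_act G act m0 gfam (semi_act G act m0 gfam m e1) (D (h, e1))" using h(2) by simp
    qed
    thus "m \<in> (\<Union>(h, e1, e2)\<in>stabilizer G act m0 \<times> E \<times> E. (\<lambda>f. semi_act G act m0 gfam f (D (h, e1))) `
               (A - semi_preimage G M act m0 gfam (C (h, e1, e2)) A))"
      by (intro UN_I[of "(h, e1, e2)"]) (use e1 e2 h in auto)
  qed
qed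


lemma boundary_exists:
  fixes G :: "('g, 'b) monoid_scheme" (structure)
  assumes cs: "cell_space G M act m0 gfam"
    and E: "E \<subseteq> lcosets\<^bsub>G\<^esub> (stabilizer G act m0)"
  shows "\<exists>D C. (\<forall>s\<in>stabilizer G act m0 \<times> E \<times> E. C s \<in> lcosets\<^bsub>G\<^esub> (stabilizer G act m0)) \<and>
    (\<forall>A. A \<subseteq> M \<longrightarrow>
      closure_E G M act m0 gfam E A \<subseteq> (\<Union>p\<in>stabilizer G act m0 \<times> E. (\<lambda>f. semi_act G act m0 gfam f (D p)) ` A)) \<and>
    (\<forall>A. A \<subseteq> M \<longrightarrow>
      boundary_E G M act m0 gfam E A \<subseteq> (\<Union>s\<in>stabilizer G act m0 \<times> E \<times> E.
          (\<lambda>f. semi_act G act m0 gfam f (D (fst s, fst (snd s)))) ` (A - semi_preimage G M act m0 gfam (C s) A)))"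
proof -
  interpret ga: group_action G M act using cs_facts[OF cs] by blast
  interpret group G using cs_facts[OF cs] by blast
  define rep where "rep = (\<lambda>e::'g set. (SOME g. g \<in> e))"
  define D where "D = (\<lambda>(h, e1). (h \<otimes> inv (rep e1)) <# stabilizer G act m0)"
  define C where "C = (\<lambda>(h, e1, e2). (h \<otimes> inv (rep e1) \<otimes> rep e2) <# stabilizer G act m0)"
  have repc: "\<And>e. e \<in> E \<Longrightarrow> rep e \<in> carrier G" using coset_rep[OF cs] E rep_def by blast
  have stc: "\<And>h. h \<in> stabilizer G act m0 \<Longrightarrow> h \<in> carrier G" unfolding stabilizer_def by auto
  have 1: "\<forall>s\<in>stabilizer G act m0 \<times> E \<times> E. C s \<in> lcosets\<^bsub>G\<^esub> (stabilizer G act m0)"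
  proof
    fix s assume "s \<in> stabilizer G act m0 \<times> E \<times> E"
    then obtain h e1 e2 where s: "s = (h, e1, e2)" "h \<in> stabilizer G act m0" "e1 \<in> E" "e2 \<in> E" by auto
    have "h \<otimes> inv (rep e1) \<otimes> rep e2 \<in> carrier G" using s stc repc by simp
    thus "C s \<in> lcosets\<^bsub>G\<^esub> (stabilizer G act m0)" unfolding C_def s LCOSETS_def by auto
  qed
  have 2: "\<forall>A. A \<subseteq> M \<longrightarrow>
      closure_E G M act m0 gfam E A \<subseteq> (\<Union>p\<in>stabilizer G act m0 \<times> E. (\<lambda>f. semi_act G act m0 gfam f (D p)) ` A) \<and>
      boundary_E G M act m0 gfam E A \<subseteq> (\<Union>s\<in>stabilizer G act m0 \<times> E \<times> E.
          (\<lambda>f. semi_act G act m0 gfam f (D (fst s, fst (snd s)))) ` (A - semi_preimage G M act m0 gfam (C s) A))"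
  proof (intro allI impI conjI)
    fix A assume A: "A \<subseteq> M"
    note bi = boundary_incl[OF cs E A]
    show "closure_E G M act m0 gfam E A \<subseteq> (\<Union>p\<in>stabilizer G act m0 \<times> E. (\<lambda>f. semi_act G act m0 gfam f (D p)) ` A)"
      using bi(1) unfolding D_def rep_def by (simp add: split_def)
    show "boundary_E G M act m0 gfam E A \<subseteq> (\<Union>s\<in>stabilizer G act m0 \<times> E \<times> E.
          (\<lambda>f. semi_act G act m0 gfam f (D (fst s, fst (snd s)))) ` (A - semi_preimage G M act m0 gfam (C s) A))"
      using bi(2) unfolding D_def C_def rep_def by (simp add: split_def)
  qed
  show ?thesis using 1 2 by (intro exI[of _ D] exI[of _ C]) auto
qed


theorem theorem1:
  fixes G :: "('g, 'b) monoid_scheme" and M :: "'m set" and act :: "'g \<Rightarrow> 'm \<Rightarrow> 'm"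
    and m0 :: 'm and gfam :: "'m \<Rightarrow> 'g"
    and I :: "'i set" and rel :: "'i \<Rightarrow> 'i \<Rightarrow> bool" and F :: "'i \<Rightarrow> 'm set"
  assumes "cell_space G M act m0 gfam"
    and "finite (stabilizer G act m0)"
    and "directed_set I rel"
    and "\<forall>i\<in>I. F i \<noteq> {} \<and> finite (F i) \<and> F i \<subseteq> M"
  shows "right_folner_net G M act m0 gfam I rel F \<longleftrightarrow>
    (\<forall>E. finite E \<and> E \<subseteq> lcosets\<^bsub>G\<^esub> (stabilizer G act m0) \<longrightarrow>
       net_tendsto I rel
         (\<lambda>i. real (card (boundary_E G M act m0 gfam E (F i))) / real (card (F i))) 0)"
proof -
  note cs = assms(1) and finH = assms(2) and d = assms(3) and FF = assms(4)
  define H where "H = stabilizer G act m0"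
  define sa where "sa = semi_act G act m0 gfam"
  define pre where "pre = semi_preimage G M act m0 gfam"
  interpret ga: group_action G M act using cs_facts[OF cs] by blast
  interpret group G using cs_facts[OF cs] by blast
  have Hc: "H \<subseteq> carrier G" unfolding H_def stabilizer_def by auto
  show ?thesis
  proof
    assume fol: "right_folner_net G M act m0 gfam I rel F"
    show "\<forall>E. finite E \<and> E \<subseteq> lcosets\<^bsub>G\<^esub> (stabilizer G act m0) \<longrightarrow>
       net_tendsto I rel (\<lambda>i. real (card (boundary_E G M act m0 gfam E (F i))) / real (card (F i))) 0"
    proof (intro allI impI)
      fix E assume E: "finite E \<and> E \<subseteq> lcosets\<^bsub>G\<^esub> (stabilizer G act m0)"
      obtain D C where DC: "\<forall>s\<in>H \<times> E \<times> E. C s \<in> lcosets\<^bsub>G\<^esub> H"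
        "\<forall>A. A \<subseteq> M \<longrightarrow> boundary_E G M act m0 gfam E A \<subseteq> (\<Union>s\<in>H \<times> E \<times> E.
          (\<lambda>f. sa f (D (fst s, fst (snd s)))) ` (A - pre (C s) A))"
      proof -
        have "E \<subseteq> lcosets\<^bsub>G\<^esub> (stabilizer G act m0)" using E by blast
        note ex = boundary_exists[OF cs this, folded H_def sa_def pre_def]
        from ex obtain D C where "\<forall>s\<in>H \<times> E \<times> E. C s \<in> lcosets\<^bsub>G\<^esub> H"
          "\<forall>A. A \<subseteq> M \<longrightarrow> boundary_E G M act m0 gfam E A \<subseteq> (\<Union>s\<in>H \<times> E \<times> E.
          (\<lambda>f. sa f (D (fst s, fst (snd s)))) ` (A - pre (C s) A))" by (elim exE conjE)
        thus ?thesis by (rule that)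
      qed
      define S where "S = H \<times> E \<times> E"
      have finS: "finite S" unfolding S_def H_def using finH E by simp
      define y where "y = (\<lambda>s i. real (card (F i - pre (C s) (F i))) / real (card (F i)))"
      have ty: "\<forall>s\<in>S. net_tendsto I rel (y s) 0"
      proof
        fix s assume "s \<in> S"
        hence "C s \<in> lcosets\<^bsub>G\<^esub> H" using DC(1) unfolding S_def by blast
        moreover have "\<forall>c\<in>lcosets\<^bsub>G\<^esub> H. net_tendsto I rel (\<lambda>i. real (card (F i - pre c (F i))) / real (card (F i))) 0"
          using fol unfolding right_folner_net_def pre_def H_def by (elim conjE)
        ultimately show "net_tendsto I rel (y s) 0" unfolding y_def by blast
      qed
      have tsum: "net_tendsto I rel (\<lambda>i. \<Sum>s\<in>S. y s i) 0" using net_sum[OF d finS ty] .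
      show "net_tendsto I rel (\<lambda>i. real (card (boundary_E G M act m0 gfam E (F i))) / real (card (F i))) 0"
      proof (rule net_le[OF tsum], intro ballI conjI)
        fix i assume i: "i \<in> I"
        have Fi: "F i \<noteq> {}" "finite (F i)" "F i \<subseteq> M" using FF i by auto
        have cp: "card (F i) > 0" using Fi by (simp add: card_gt_0_iff)
        show "0 \<le> real (card (boundary_E G M act m0 gfam E (F i))) / real (card (F i))" by simp
        let ?U = "\<lambda>s. (\<lambda>f. sa f (D (fst s, fst (snd s)))) ` (F i - pre (C s) (F i))"
        have finU: "finite (\<Union>s\<in>S. ?U s)" using finS Fi by auto
        have "card (boundary_E G M act m0 gfam E (F i)) \<le> card (\<Union>s\<in>S. ?U s)"
          using card_mono[OF finU] DC(2)[rule_format, OF Fi(3)] unfolding S_def by simp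
        also have "\<dots> \<le> (\<Sum>s\<in>S. card (?U s))" by (rule card_UN_le[OF finS])
        also have "\<dots> \<le> (\<Sum>s\<in>S. card (F i - pre (C s) (F i)))"
          by (rule sum_mono) (rule card_image_le, use Fi in auto)
        finally have "real (card (boundary_E G M act m0 gfam E (F i))) \<le> (\<Sum>s\<in>S. real (card (F i - pre (C s) (F i))))"
          by (metis of_nat_le_iff of_nat_sum)
        hence "real (card (boundary_E G M act m0 gfam E (F i))) / real (card (F i)) \<le>
               (\<Sum>s\<in>S. real (card (F i - pre (C s) (F i)))) / real (card (F i))"
          using cp by (simp add: divide_right_mono)
        thus "real (card (boundary_E G M act m0 gfam E (F i))) / real (card (F i)) \<le> (\<Sum>s\<in>S. y s i)"
          unfolding y_def by (simp add: sum_divide_distrib)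
      qed
    qed
  next
    assume bd: "\<forall>E. finite E \<and> E \<subseteq> lcosets\<^bsub>G\<^esub> (stabilizer G act m0) \<longrightarrow>
       net_tendsto I rel (\<lambda>i. real (card (boundary_E G M act m0 gfam E (F i))) / real (card (F i))) 0"
    have Hl: "H \<in> lcosets\<^bsub>G\<^esub> H" using lcos_mult_one[OF Hc] unfolding LCOSETS_def by force
    have saH: "sa m H = m" if m: "m \<in> M" for m
    proof -
      have "sa m H = sa m (\<one>\<^bsub>G\<^esub> <#\<^bsub>G\<^esub> H)" using lcos_mult_one[OF Hc] by simp
      also have "\<dots> = act (gfam m \<otimes>\<^bsub>G\<^esub> \<one>\<^bsub>G\<^esub>) m0" unfolding sa_def H_def using sa_coset[OF cs _ m] by simp
      also have "\<dots> = m" using cs_facts(4,5)[OF cs m] by simp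
      finally show ?thesis .
    qed
    have "\<forall>c\<in>lcosets\<^bsub>G\<^esub> H. net_tendsto I rel (\<lambda>i. real (card (F i - pre c (F i))) / real (card (F i))) 0"
    proof
      fix c assume c: "c \<in> lcosets\<^bsub>G\<^esub> H"
      define E where "E = {H, c}"
      have E: "finite E" "E \<subseteq> lcosets\<^bsub>G\<^esub> H" using Hl c E_def by auto
      obtain D C where DC:
        "\<forall>A. A \<subseteq> M \<longrightarrow> closure_E G M act m0 gfam E A \<subseteq> (\<Union>p\<in>H \<times> E. (\<lambda>f. sa f (D p)) ` A)"
      proof -
        note ex = boundary_exists[OF cs E(2)[unfolded H_def], folded H_def sa_def pre_def]
        from ex obtain D C where
          "\<forall>A. A \<subseteq> M \<longrightarrow> closure_E G M act m0 gfam E A \<subseteq> (\<Union>p\<in>H \<times> E. (\<lambda>f. sa f (D p)) ` A)"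
          by (elim exE conjE)
        thus ?thesis by (rule that)
      qed
      have tb: "net_tendsto I rel (\<lambda>i. real (card (boundary_E G M act m0 gfam E (F i))) / real (card (F i))) 0"
        using bd E unfolding H_def by blast
      show "net_tendsto I rel (\<lambda>i. real (card (F i - pre c (F i))) / real (card (F i))) 0"
      proof (rule net_le[OF tb], intro ballI conjI)
        fix i assume i: "i \<in> I"
        have Fi: "F i \<noteq> {}" "finite (F i)" "F i \<subseteq> M" using FF i by auto
        show "0 \<le> real (card (F i - pre c (F i))) / real (card (F i))" by simp
        have finE: "finite (H \<times> E)" using finH E unfolding H_def by simp
        have "finite (\<Union>p\<in>H \<times> E. (\<lambda>f. sa f (D p)) ` F i)" using finE Fi by auto
        hence fc: "finite (closure_E G M act m0 gfam E (F i))" using finite_subset[OF DC[rule_format, OF Fi(3)]] by blast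
        have fb: "finite (boundary_E G M act m0 gfam E (F i))"
          using fc unfolding boundary_E_def by simp
        have "F i - pre c (F i) \<subseteq> boundary_E G M act m0 gfam E (F i)"
        proof
          fix m assume m: "m \<in> F i - pre c (F i)"
          have mM: "m \<in> M" using m Fi by auto
          have "sa m c \<notin> F i" using m mM unfolding pre_def semi_preimage_def sa_def by auto
          moreover have "sa m H \<in> F i" using saH[OF mM] m by simp
          ultimately show "m \<in> boundary_E G M act m0 gfam E (F i)"
            unfolding boundary_E_def closure_E_def interior_E_def E_def sa_def using mM by auto
        qed
        hence "card (F i - pre c (F i)) \<le> card (boundary_E G M act m0 gfam E (F i))"
          by (rule card_mono[OF fb])
        thus "real (card (F i - pre c (F i))) / real (card (F i)) \<le>
              real (card (boundary_E G M act m0 gfam E (F i))) / real (card (F i))"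
          by (simp add: divide_right_mono)
      qed
    qed
    thus "right_folner_net G M act m0 gfam I rel F"
      unfolding right_folner_net_def pre_def H_def using FF by (intro conjI)
  qed
qed

end
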